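(* Let $\mathcal U\subset Q\times Q$ be of $D$-type. Then $F_{D'R}\circ F_{RD'}=\mathrm{id}_{\Sigma_R(\mathcal U)}$; consequently $F_{RD'}:\Sigma_R(\mathcal U)\to\Sigma_D'(\mathcal U)$ is injective.
   Context: $G$ is a Lie group acting freely and properly on the left on $Q$ by $l^Q$; $\pi:Q\to Q/G$. $\tilde G=(Q\times G)/G$ for $g\cdot(q,h)=(l^Q_g(q),ghg^{-1})$, classes $[q,h]$; $[q_0,q_1]$ classes in $(Q\times Q)/G$ (diagonal action). $F_1([q,g])=[q,l^Q_g(q)]$, $F_2([q_0,q_1])=(\pi(q_0),\pi(q_1))$, $\hat F_1([q,g])=([q,g],\pi(q))$, $\hat F_2([q,g],r)=(\pi(q),r)$, $\hat s_2(\pi(q),r)=([q,e],r)$. $\mathcal V_d=\{(q,l^Q_g(q))\}$; an open $\mathcal U\subset Q\times Q$ is of $D$-type if it contains $\mathcal V_d$ and is invariant under $(g_0,g_1)\cdot(q_0,q_1)=(l^Q_{g_0}(q_0),l^Q_{g_1}(q_1))$. $\mathcal U''=(\pi\times\pi)(\mathcal U)$, $\mathcal W=\hat F_2^{-1}(\mathcal U'')$. Fiber bundles with section over $Q/G$: $\tilde G\times(Q/G)$ (projection $([q,h],r)\mapsto\pi(q)$, section $\pi(q)\mapsto([q,e],\pi(q))$), $(Q\times Q)/G$ (projection $[q_0,q_1]\mapsto\pi(q_0)$, section $[q,q]$), $(Q/G)^2$ (first projection, diagonal section). A semi-local morphism between such bundles is a smooth map on an open subset containing the image of the section, commuting with projections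 and sending section to section. $\Sigma_R(\mathcal U)$: semi-local morphisms $s:\mathcal U''\to(Q\times Q)/G$ with $F_2\circ s=\mathrm{id}_{\mathcal U''}$. $\Sigma_D'(\mathcal U)$: semi-local morphisms $\Psi:\mathcal W\to(Q\times Q)/G$ with $\Psi\circ\hat F_1=F_1$ and $F_2\circ\Psi=\hat F_2|_{\mathcal W}$. $F_{RD'}(s)([q,g],r)=[q,l^Q_g(q')]$ where $s(\pi(q),r)=[q,q']$; $F_{D'R}(\Psi)=\Psi\circ\hat s_2|_{\mathcal U''}$ (both maps are well defined between these sets). *)

theory Defs
  imports "HOL-Algebra.Group_Action"
begin

text \<open>Set-theoretic model. G is an HOL-Algebra group acting on the set Q by act
  (left action l^Q). Quotients are modelled by sets of orbits.\<close>

definition free_action :: "('g, 'b) monoid_scheme \<Rightarrow> 'q set \<Rightarrow> ('g \<Rightarrow> 'q \<Rightarrow> 'q) \<Rightarrow> bool" where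
  "free_action G Q act \<longleftrightarrow>
     (\<forall>g\<in>carrier G. \<forall>q\<in>Q. act g q = q \<longrightarrow> g = \<one>\<^bsub>G\<^esub>)"

definition qpi :: "('g, 'b) monoid_scheme \<Rightarrow> ('g \<Rightarrow> 'q \<Rightarrow> 'q) \<Rightarrow> 'q \<Rightarrow> 'q set" where
  "qpi G act q = {act g q | g. g \<in> carrier G}"

definition QmodG :: "('g, 'b) monoid_scheme \<Rightarrow> 'q set \<Rightarrow> ('g \<Rightarrow> 'q \<Rightarrow> 'q) \<Rightarrow> 'q set set" where
  "QmodG G Q act = qpi G act ` Q"

text \<open>class [q,h] in tilde G = (Q x G)/G\<close>
definition gtcls :: "('g, 'b) monoid_scheme \<Rightarrow> ('g \<Rightarrow> 'q \<Rightarrow> 'q) \<Rightarrow> 'q \<Rightarrow> 'g \<Rightarrow> ('q \<times> 'g) set" where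
  "gtcls G act q h = {(act g q, g \<otimes>\<^bsub>G\<^esub> h \<otimes>\<^bsub>G\<^esub> inv\<^bsub>G\<^esub> g) | g. g \<in> carrier G}"

definition Gtilde :: "('g, 'b) monoid_scheme \<Rightarrow> 'q set \<Rightarrow> ('g \<Rightarrow> 'q \<Rightarrow> 'q) \<Rightarrow> ('q \<times> 'g) set set" where
  "Gtilde G Q act = {gtcls G act q h | q h. q \<in> Q \<and> h \<in> carrier G}"

definition pcls :: "('g, 'b) monoid_scheme \<Rightarrow> ('g \<Rightarrow> 'q \<Rightarrow> 'q) \<Rightarrow> 'q \<Rightarrow> 'q \<Rightarrow> ('q \<times> 'q) set" where
  "pcls G act q0 q1 = {(act g q0, act g q1) | g. g \<in> carrier G}"

definition QQmodG :: "('g, 'b) monoid_scheme \<Rightarrow> 'q set \<Rightarrow> ('g \<Rightarrow> 'q \<Rightarrow> 'q) \<Rightarrow> ('q \<times> 'q) set set" where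
  "QQmodG G Q act = {pcls G act q0 q1 | q0 q1. q0 \<in> Q \<and> q1 \<in> Q}"

definition F2 :: "('g, 'b) monoid_scheme \<Rightarrow> ('g \<Rightarrow> 'q \<Rightarrow> 'q) \<Rightarrow> ('q \<times> 'q) set \<Rightarrow> 'q set \<times> 'q set" where
  "F2 G act c = (let p = (SOME p. p \<in> c) in (qpi G act (fst p), qpi G act (snd p)))"

definition hatF2 :: "('g, 'b) monoid_scheme \<Rightarrow> ('g \<Rightarrow> 'q \<Rightarrow> 'q) \<Rightarrow> ('q \<times> 'g) set \<times> 'q set \<Rightarrow> 'q set \<times> 'q set" where
  "hatF2 G act y = (let p = (SOME p. p \<in> fst y) in (qpi G act (fst p), snd y))"

definition hats2 :: "('g, 'b) monoid_scheme \<Rightarrow> 'q set \<Rightarrow> ('g \<Rightarrow> 'q \<Rightarrow> 'q) \<Rightarrow> 'q set \<times> 'q set \<Rightarrow> ('q \<times> 'g) set \<times> 'q set" where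
  "hats2 G Q act x = (gtcls G act (SOME q. q \<in> Q \<and> qpi G act q = fst x) \<one>\<^bsub>G\<^esub>, snd x)"

text \<open>D-type subsets (openness dropped)\<close>
definition Dtype :: "('g, 'b) monoid_scheme \<Rightarrow> 'q set \<Rightarrow> ('g \<Rightarrow> 'q \<Rightarrow> 'q) \<Rightarrow> ('q \<times> 'q) set \<Rightarrow> bool" where
  "Dtype G Q act U \<longleftrightarrow> U \<subseteq> Q \<times> Q
     \<and> (\<forall>q\<in>Q. \<forall>g\<in>carrier G. (q, act g q) \<in> U)
     \<and> (\<forall>g0\<in>carrier G. \<forall>g1\<in>carrier G. \<forall>(q0,q1)\<in>U. (act g0 q0, act g1 q1) \<in> U)"

definition Upp :: "('g, 'b) monoid_scheme \<Rightarrow> ('g \<Rightarrow> 'q \<Rightarrow> 'q) \<Rightarrow> ('q \<times> 'q) set \<Rightarrow> ('q set \<times> 'q set) set" where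
  "Upp G act U = (\<lambda>(q0,q1). (qpi G act q0, qpi G act q1)) ` U"

definition Wset :: "('g, 'b) monoid_scheme \<Rightarrow> 'q set \<Rightarrow> ('g \<Rightarrow> 'q \<Rightarrow> 'q) \<Rightarrow> ('q \<times> 'q) set \<Rightarrow> (('q \<times> 'g) set \<times> 'q set) set" where
  "Wset G Q act U = {y \<in> Gtilde G Q act \<times> QmodG G Q act. hatF2 G act y \<in> Upp G act U}"

definition SigmaR :: "('g, 'b) monoid_scheme \<Rightarrow> 'q set \<Rightarrow> ('g \<Rightarrow> 'q \<Rightarrow> 'q) \<Rightarrow> ('q \<times> 'q) set
     \<Rightarrow> ('q set \<times> 'q set \<Rightarrow> ('q \<times> 'q) set) set" where
  "SigmaR G Q act U = {s. s \<in> extensional (Upp G act U)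
     \<and> (\<forall>x\<in>Upp G act U. s x \<in> QQmodG G Q act \<and> F2 G act (s x) = x
                          \<and> fst (F2 G act (s x)) = fst x)
     \<and> (\<forall>q\<in>Q. (qpi G act q, qpi G act q) \<in> Upp G act U \<longrightarrow>
              s (qpi G act q, qpi G act q) = pcls G act q q)}"

definition FRD :: "('g, 'b) monoid_scheme \<Rightarrow> 'q set \<Rightarrow> ('g \<Rightarrow> 'q \<Rightarrow> 'q) \<Rightarrow> ('q \<times> 'q) set
     \<Rightarrow> ('q set \<times> 'q set \<Rightarrow> ('q \<times> 'q) set) \<Rightarrow> (('q \<times> 'g) set \<times> 'q set \<Rightarrow> ('q \<times> 'q) set)" where
  "FRD G Q act U s = (\<lambda>y\<in>Wset G Q act U.
     (let p = (SOME p. p \<in> fst y); q = fst p; g = snd p;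
          q' = (SOME q'. (q, q') \<in> s (qpi G act q, snd y))
      in pcls G act q (act g q')))"

definition FDR :: "('g, 'b) monoid_scheme \<Rightarrow> 'q set \<Rightarrow> ('g \<Rightarrow> 'q \<Rightarrow> 'q) \<Rightarrow> ('q \<times> 'q) set
     \<Rightarrow> (('q \<times> 'g) set \<times> 'q set \<Rightarrow> ('q \<times> 'q) set) \<Rightarrow> ('q set \<times> 'q set \<Rightarrow> ('q \<times> 'q) set)" where
  "FDR G Q act U \<Psi> = (\<lambda>x\<in>Upp G act U. \<Psi> (hats2 G Q act x))"

end

theory Submission
  imports Defs
begin

lemma act_one:
  assumes "group_action G Q act" "x \<in> Q"
  shows "act \<one>\<^bsub>G\<^esub> x = x"
  using group_action.id_eq_one[OF assms(1)] assms(2) by (metis restrict_apply')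

lemma pcls_shift:
  assumes "group G" "group_action G Q act" "a \<in> Q" "b \<in> Q" "h \<in> carrier G"
  shows "pcls G act (act h a) (act h b) = pcls G act a b"
proof
  show "pcls G act (act h a) (act h b) \<subseteq> pcls G act a b"
  proof
    fix z assume "z \<in> pcls G act (act h a) (act h b)"
    then obtain g where g: "g \<in> carrier G" "z = (act g (act h a), act g (act h b))"
      unfolding pcls_def by blast
    then have "z = (act (g \<otimes>\<^bsub>G\<^esub> h) a, act (g \<otimes>\<^bsub>G\<^esub> h) b)"
      using group_action.composition_rule[OF assms(2)] assms by simp
    moreover have "g \<otimes>\<^bsub>G\<^esub> h \<in> carrier G" using monoid.m_closed[OF group.is_monoid[OF assms(1)] g(1) assms(5)] .
    ultimately show "z \<in> pcls G act a b" unfolding pcls_def by blast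
  qed
next
  show "pcls G act a b \<subseteq> pcls G act (act h a) (act h b)"
  proof
    fix z assume "z \<in> pcls G act a b"
    then obtain g where g: "g \<in> carrier G" "z = (act g a, act g b)"
      unfolding pcls_def by blast
    have ih: "inv\<^bsub>G\<^esub> h \<in> carrier G" using group.inv_closed[OF assms(1) assms(5)] .
    have gi: "g \<otimes>\<^bsub>G\<^esub> inv\<^bsub>G\<^esub> h \<in> carrier G" using monoid.m_closed[OF group.is_monoid[OF assms(1)] g(1) ih] .
    have eq: "(g \<otimes>\<^bsub>G\<^esub> inv\<^bsub>G\<^esub> h) \<otimes>\<^bsub>G\<^esub> h = g"
      using assms g ih by (simp add: group.is_monoid monoid.m_assoc group.l_inv monoid.r_one)
    have "act g a = act (g \<otimes>\<^bsub>G\<^esub> inv\<^bsub>G\<^esub> h) (act h a)"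
      using group_action.composition_rule[OF assms(2) assms(3) gi assms(5)] eq by simp
    moreover have "act g b = act (g \<otimes>\<^bsub>G\<^esub> inv\<^bsub>G\<^esub> h) (act h b)"
      using group_action.composition_rule[OF assms(2) assms(4) gi assms(5)] eq by simp
    ultimately show "z \<in> pcls G act (act h a) (act h b)" using g gi unfolding pcls_def by blast
  qed
qed

lemma qpi_shift:
  assumes "group G" "group_action G Q act" "a \<in> Q" "h \<in> carrier G"
  shows "qpi G act (act h a) = qpi G act a"
proof -
  have "pcls G act (act h a) (act h a) = pcls G act a a" using pcls_shift[OF assms(1,2,3,3,4)] .
  then have "fst ` pcls G act (act h a) (act h a) = fst ` pcls G act a a" by simp
  moreover have "\<And>c. fst ` pcls G act c c = qpi G act c"
    unfolding pcls_def qpi_def by force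
  ultimately show ?thesis by simp
qed

lemma main_pt:
  assumes grp: "group G" and ga: "group_action G Q act" and D: "Dtype G Q act U"
    and s: "s \<in> SigmaR G Q act U" and x: "x \<in> Upp G act U"
  shows "FRD G Q act U s (hats2 G Q act x) = s x"
proof -
  obtain q0 q1 where qq: "(q0,q1) \<in> U" and xe: "x = (qpi G act q0, qpi G act q1)"
    using x unfolding Upp_def by auto
  have q0Q: "q0 \<in> Q" and q1Q: "q1 \<in> Q" using qq D unfolding Dtype_def by auto
  define qs where "qs = (SOME q. q \<in> Q \<and> qpi G act q = fst x)"
  have qs: "qs \<in> Q \<and> qpi G act qs = fst x"
    unfolding qs_def by (rule someI[of _ q0]) (simp add: q0Q xe)
  have one: "\<one>\<^bsub>G\<^esub> \<in> carrier G" using monoid.one_closed[OF group.is_monoid[OF grp]] .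
  have hs: "hats2 G Q act x = (gtcls G act qs \<one>\<^bsub>G\<^esub>, snd x)"
    unfolding hats2_def qs_def by simp
  have ne: "(act \<one>\<^bsub>G\<^esub> qs, \<one>\<^bsub>G\<^esub> \<otimes>\<^bsub>G\<^esub> \<one>\<^bsub>G\<^esub> \<otimes>\<^bsub>G\<^esub> inv\<^bsub>G\<^esub> \<one>\<^bsub>G\<^esub>) \<in> gtcls G act qs \<one>\<^bsub>G\<^esub>"
    unfolding gtcls_def using one by blast
  define p where "p = (SOME p. p \<in> gtcls G act qs \<one>\<^bsub>G\<^esub>)"
  have "p \<in> gtcls G act qs \<one>\<^bsub>G\<^esub>" unfolding p_def using ne by (rule someI)
  then obtain g where g: "g \<in> carrier G" "p = (act g qs, g \<otimes>\<^bsub>G\<^esub> \<one>\<^bsub>G\<^esub> \<otimes>\<^bsub>G\<^esub> inv\<^bsub>G\<^esub> g)"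
    unfolding gtcls_def by blast
  have sndp: "snd p = \<one>\<^bsub>G\<^esub>" using g grp by (simp add: group.is_monoid monoid.r_one group.r_inv)
  have qpip: "qpi G act (fst p) = fst x" using g qs qpi_shift[OF grp ga] by simp
  have fpQ: "fst p \<in> Q" using group_action.element_image[OF ga g(1) conjunct1[OF qs] refl] g(2) by simp
  have inG: "gtcls G act qs \<one>\<^bsub>G\<^esub> \<in> Gtilde G Q act" unfolding Gtilde_def using qs one by blast
  have inQ: "snd x \<in> QmodG G Q act" unfolding QmodG_def using xe q1Q by simp
  have "hatF2 G act (hats2 G Q act x) = x"
    unfolding hatF2_def hs using qpip p_def by (simp add: Let_def)
  then have inW: "hats2 G Q act x \<in> Wset G Q act U"
    unfolding Wset_def using inG inQ x hs by simp
  have sx: "s x \<in> QQmodG G Q act" "F2 G act (s x) = x" using s x unfolding SigmaR_def by auto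
  obtain a b where ab: "a \<in> Q" "b \<in> Q" "s x = pcls G act a b"
    using sx(1) unfolding QQmodG_def by blast
  define r where "r = (SOME r. r \<in> s x)"
  have "(act \<one>\<^bsub>G\<^esub> a, act \<one>\<^bsub>G\<^esub> b) \<in> s x" using ab one unfolding pcls_def by blast
  then have "r \<in> s x" unfolding r_def by (rule someI)
  then obtain h where h: "h \<in> carrier G" "r = (act h a, act h b)"
    using ab unfolding pcls_def by blast
  have "qpi G act (fst r) = fst x" using sx(2) unfolding F2_def r_def Let_def by (metis fst_conv)
  then have "qpi G act a = qpi G act (fst p)" using h qpip qpi_shift[OF grp ga ab(1)] by simp
  then have "fst p \<in> qpi G act a"
    using fpQ unfolding qpi_def by (metis (mono_tags, lifting) act_one[OF ga fpQ] mem_Collect_eq one)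
  then obtain k where k: "k \<in> carrier G" "fst p = act k a" unfolding qpi_def by blast
  have ex: "(fst p, act k b) \<in> s x" using ab k unfolding pcls_def by blast
  define q' where "q' = (SOME q'. (fst p, q') \<in> s (qpi G act (fst p), snd x))"
  have sx2: "s (qpi G act (fst p), snd x) = s x" using qpip by simp
  have "(fst p, q') \<in> s x" unfolding q'_def sx2 using ex by (rule someI)
  then obtain m where m: "m \<in> carrier G" "fst p = act m a" "q' = act m b"
    using ab unfolding pcls_def by blast
  have q'Q: "q' \<in> Q" using group_action.element_image[OF ga m(1) ab(2) refl] m(3) by simp
  have "FRD G Q act U s (hats2 G Q act x) = pcls G act (fst p) (act (snd p) q')"
    unfolding FRD_def using inW hs p_def q'_def by (simp add: Let_def)
  also have "\<dots> = pcls G act (fst p) q'" using sndp act_one[OF ga q'Q] by simp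
  also have "\<dots> = s x" using m ab pcls_shift[OF grp ga] by simp
  finally show ?thesis .
qed

theorem proposition3p30:
  fixes G :: "('g, 'b) monoid_scheme" and Q :: "'q set" and act :: "'g \<Rightarrow> 'q \<Rightarrow> 'q"
    and U :: "('q \<times> 'q) set"
  assumes "group G"
    and "group_action G Q act"
    and "free_action G Q act"
    and "Dtype G Q act U"
  shows "(\<forall>s\<in>SigmaR G Q act U. FDR G Q act U (FRD G Q act U s) = s)
         \<and> inj_on (FRD G Q act U) (SigmaR G Q act U)"
proof -
  have A: "\<forall>s\<in>SigmaR G Q act U. FDR G Q act U (FRD G Q act U s) = s"
  proof
    fix s assume s: "s \<in> SigmaR G Q act U"
    have ext: "s \<in> extensional (Upp G act U)" using s unfolding SigmaR_def by simp
    show "FDR G Q act U (FRD G Q act U s) = s"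
    proof
      fix x show "FDR G Q act U (FRD G Q act U s) x = s x"
      proof (cases "x \<in> Upp G act U")
        case True
        then show ?thesis using main_pt[OF assms(1,2,4) s True] unfolding FDR_def by simp
      next
        case False
        then have "s x = undefined" using ext False by (metis extensional_arb)
        then show ?thesis using False unfolding FDR_def by simp
      qed
    qed
  qed
  moreover have "inj_on (FRD G Q act U) (SigmaR G Q act U)"
    by (rule inj_on_inverseI[where g = "FDR G Q act U"]) (use A in blast)
  ultimately show ?thesis by blast
qed

end
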